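(* Let $m\ge1$, $q=2^m$, $n=3$, and let $L(x)=ax+bx^q+cx^{q^2}$ with $a,b,c\in\mathbb F_{q^3}$ and $L(1)=0$. Then \[|\ker\mathrm{Tr}\cap\ker L^\prime|=\begin{cases}1&\text{if }\mathrm{Tr}(a^{q+1}+a^qb+b^{q+1})\ne0,\\ q^2&\text{if }a+b^{q^2}=a+c^q=0,\\ q&\text{otherwise}.\end{cases}\]
   Context: $\mathrm{Tr}(x)=x+x^q+x^{q^2}$ is the trace map of $\mathbb F_{q^3}$ over $\mathbb F_q$. For a $2$-linear polynomial $L(x)=\sum_j a_jx^{2^j}$ over $\mathbb F_{q^3}$, its adjoint is $L^\prime(x)=\sum_j(a_jx)^{2^{-j}}$, where $y\mapsto y^{2^{-j}}$ is the inverse of $y\mapsto y^{2^j}$ on $\mathbb F_{q^3}$; here $L'(x)=ax+(bx)^{q^2}+(cx)^{q}$. $\ker$ denotes the kernel of an additive map on $\mathbb F_{q^3}$. *)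

theory Defs
  imports Main
begin

text \<open>The field F_{q^3} is modelled as a finite field type 'a with CARD('a) = q^3.
  Trace map of F_{q^3} over F_q.\<close>
definition Tr :: "nat \<Rightarrow> 'a::field \<Rightarrow> 'a" where
  "Tr q x = x + x ^ q + x ^ (q ^ 2)"

definition Ladj :: "nat \<Rightarrow> 'a::field \<Rightarrow> 'a \<Rightarrow> 'a \<Rightarrow> 'a \<Rightarrow> 'a" where
  "Ladj q a b c x = a * x + (b * x) ^ (q ^ 2) + (c * x) ^ q"

definition L :: "nat \<Rightarrow> 'a::field \<Rightarrow> 'a \<Rightarrow> 'a \<Rightarrow> 'a \<Rightarrow> 'a" where
  "L q a b c x = a * x + b * x ^ q + c * x ^ (q ^ 2)"

end

theory Submission imports Defs "HOL-Computational_Algebra.Polynomial" begin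

lemma sum_card_zero: "of_nat (card (UNIV::'a::{ring_1,finite} set)) = (0::'a)"
proof -
  have "(\<Sum>y\<in>UNIV. 1 + y) = (\<Sum>y\<in>(UNIV::'a set). y)"
    by (rule sum.reindex_bij_witness[where i="\<lambda>y. y - 1" and j="\<lambda>y. 1 + y"]) auto
  thus ?thesis by (simp add: sum.distrib)
qed

lemma char_two:
  fixes k :: nat
  assumes "card (UNIV::'a::{field,finite} set) = 2^k" "k \<ge> 1"
  shows "(2::'a) = 0"
proof -
  have "(of_nat (2^k)::'a) = 0" using sum_card_zero[where 'a='a] assms by simp
  hence "(2::'a)^k = 0" by simp
  thus ?thesis by simp
qed

lemma frob:
  fixes x y :: "'a::comm_ring_1"
  assumes "(2::'a) = 0"
  shows "(x+y)^(2^k) = x^(2^k) + y^(2^k)"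
proof (induction k)
  case 0 show ?case by simp
next
  case (Suc k)
  have "(x+y)^(2^Suc k) = ((x+y)^(2^k))^2" by (simp add: power_mult[symmetric] mult.commute)
  also have "\<dots> = (x^(2^k) + y^(2^k))^2" using Suc by simp
  also have "\<dots> = (x^(2^k))^2 + (y^(2^k))^2 + 2*(x^(2^k)*y^(2^k))"
    by (simp add: power2_eq_square algebra_simps)
  also have "\<dots> = x^(2^Suc k) + y^(2^Suc k)" using assms
    by (simp add: power_mult[symmetric] mult.commute)
  finally show ?case .
qed

lemma fermat:
  fixes x :: "'a::{field,finite}"
  shows "x ^ card (UNIV::'a set) = x"
proof -
  have n1: "card (UNIV::'a set) \<ge> 1" by (simp add: Suc_leI finite_UNIV_card_ge_0)
  show ?thesis
  proof (cases "x = 0")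
    case True then show ?thesis using n1 by simp
  next
    case False
    let ?N = "UNIV - {0::'a}"
    have "(\<Prod>y\<in>?N. x*y) = (\<Prod>y\<in>?N. y)"
      by (rule prod.reindex_bij_witness[where i="\<lambda>y. y / x" and j="\<lambda>y. x * y"]) (use False in auto)
    moreover have "(\<Prod>y\<in>?N. x*y) = x^card ?N * (\<Prod>y\<in>?N. y)" by (simp add: prod.distrib)
    moreover have "(\<Prod>y\<in>?N. y) \<noteq> 0" by simp
    ultimately have "x^card ?N = 1" by simp
    moreover have "card ?N = card (UNIV::'a set) - 1" by (simp add: card_Diff_singleton)
    ultimately have "x^(card (UNIV::'a set) - 1) = 1" by simp
    hence "x^(card (UNIV::'a set) - 1 + 1) = x" by simp
    thus ?thesis using n1 by simp
  qed
qed

lemma card_kernel_image: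
  fixes f :: "'a::{ab_group_add,finite} \<Rightarrow> 'b::ab_group_add"
  assumes add: "\<And>x y. f (x+y) = f x + f y"
  shows "card (UNIV::'a set) = card {x. f x = 0} * card (range f)"
proof -
  have fib: "card (f -` {y}) = card {x. f x = 0}" if yr: "y \<in> range f" for y
  proof -
    obtain x0 where y: "y = f x0" using yr by auto
    have "f -` {y} = (\<lambda>k. x0 + k) ` {x. f x = 0}"
    proof (rule set_eqI, rule iffI)
      fix x :: 'a assume "x \<in> f -` {y}"
      hence "f x = f x0" using y by simp
      moreover have "f x = f (x - x0) + f x0" using add[of "x - x0" x0] by simp
      ultimately have "f (x - x0) = 0" by simp
      thus "x \<in> (\<lambda>k. x0 + k) ` {x. f x = 0}" by (intro image_eqI[of _ _ "x - x0"]) auto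
    next
      fix x :: 'a assume "x \<in> (\<lambda>k. x0 + k) ` {x. f x = 0}"
      then obtain k where "f k = 0" "x = x0 + k" by auto
      thus "x \<in> f -` {y}" using add[of x0 k] y by simp
    qed
    moreover have "inj_on (\<lambda>k. x0 + k) {x. f x = 0}" by (auto simp: inj_on_def)
    ultimately show ?thesis by (simp add: card_image)
  qed
  have "UNIV = (\<Union>y\<in>range f. f -` {y})" by auto
  hence "card (UNIV::'a set) = card (\<Union>y\<in>range f. f -` {y})" by simp
  also have "\<dots> = (\<Sum>y\<in>range f. card (f -` {y}))" by (rule card_UN_disjoint) auto
  also have "\<dots> = (\<Sum>y\<in>range f. card {x. f x = 0})" using fib by simp
  also have "\<dots> = card {x. f x = 0} * card (range f)" by simp
  finally show ?thesis .
qed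

lemma root_bound:
  fixes u v w :: "'a::field"
  assumes "w \<noteq> 0" "d < n" "e < n"
  shows "card {x. u * x^d + v * x^e + w * x^n = 0} \<le> n"
proof -
  let ?p = "monom u d + monom v e + monom w n"
  have cf: "coeff ?p n = w" using assms by simp
  have nz: "?p \<noteq> 0"
  proof
    assume "?p = 0"
    hence "coeff ?p n = 0" by simp
    with cf assms show False by simp
  qed
  have dg: "degree ?p \<le> n" using assms
    by (meson degree_add_le degree_monom_le le_trans less_imp_le)
  have "{x. u * x^d + v * x^e + w * x^n = 0} = {x. poly ?p x = 0}" by (simp add: poly_monom)
  thus ?thesis using card_poly_roots_bound[OF nz] dg by simp
qed

lemma ident:
  fixes a0 a1 a2 b0 b1 b2 :: "'a::comm_ring_1"
  shows "(a0 + b2) * (a1 + b0) + (a0 + b2) * (b0 + a2 + b2) + (b2 + a1 + b1) * (b0 + a2 + b2)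
    = (a0*a1 + a1*b0 + b0*b1) + (a1*a2 + a2*b1 + b1*b2) + (a2*a0 + a0*b2 + b2*b0)
      + 2*(a0*b0 + a1*b2 + b0*b2 + a2*b2 + b2*b2)"
  by (simp add: algebra_simps)


theorem mainTheorem4:
  fixes a b c :: "'a::{field,finite}" and m q :: nat
  assumes "m \<ge> 1" and "q = 2 ^ m" and "card (UNIV :: 'a set) = q ^ 3"
    and "L q a b c 1 = 0"
  shows "card {x. Tr q x = 0 \<and> Ladj q a b c x = 0} =
    (if Tr q (a ^ (q + 1) + a ^ q * b + b ^ (q + 1)) \<noteq> 0 then 1
     else if a + b ^ (q ^ 2) = 0 \<and> a + c ^ q = 0 then q ^ 2
     else q)"
proof -
  have q2: "q \<ge> 2" using assms(1,2)
    by (metis power_increasing power_one_right zero_less_numeral nat_le_linear one_le_numeral le_trans)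
  have qq: "q < q^2" using q2 by (simp add: power2_eq_square)
  have qq1: "1 < q^2" using q2 qq by linarith
  have cardq: "card (UNIV::'a set) = 2 ^ (3*m)" using assms(2,3) by (simp add: power_mult mult.commute)
  have two: "(2::'a) = 0" using char_two[OF cardq] assms(1) by simp
  have yy: "\<And>y::'a. y + y = 0" using two by (metis mult_2 mult_zero_left)
  have neg: "\<And>y::'a. - y = y" using yy by (metis add_eq_0_iff)
  define s where "s = (\<lambda>x::'a. x^q)"
  have s_x: "\<And>x. x^q = s x" by (simp add: s_def)
  have s_add: "\<And>x y. s (x+y) = s x + s y" using frob[OF two] by (simp add: s_def assms(2))
  have s_mult: "\<And>x y. s (x*y) = s x * s y" by (simp add: s_def power_mult_distrib)
  have s_div: "\<And>x y. s (x/y) = s x / s y" by (simp add: s_def power_divide)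
  have s_eq0: "\<And>x. s x = 0 \<longleftrightarrow> x = 0" using q2 by (simp add: s_def)
  have s1: "s 1 = 1" by (simp add: s_def)
  have s0: "s 0 = 0" using s_eq0 by simp
  have s_sq: "\<And>x. x^(q^2) = s (s x)" by (simp add: s_def power_mult[symmetric] power2_eq_square)
  have s3: "\<And>x. s (s (s x)) = x"
  proof -
    fix x :: 'a
    have "s (s (s x)) = x^(q^3)" by (simp add: s_def power_mult[symmetric] power3_eq_cube)
    also have "\<dots> = x" using fermat[of x] assms(3) by simp
    finally show "s (s (s x)) = x" .
  qed
  have Tr_s: "\<And>x. Tr q x = x + s x + s (s x)" by (simp add: Tr_def s_sq s_x)
  have sTr: "\<And>x. Tr q x = 0 \<longleftrightarrow> s (s x) = x + s x"
  proof -
    fix x :: 'a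
    show "Tr q x = 0 \<longleftrightarrow> s (s x) = x + s x"
      unfolding Tr_s
      by (metis add.assoc add.commute add_eq_0_iff neg)
  qed
  have "a + b + c = 0" using assms(4) by (simp add: L_def)
  hence c: "c = a + b" using neg by (metis add.commute add_eq_0_iff)
  define A where "A = a + s (s b)"
  define B where "B = s (s b) + s c"
  have Lad: "\<And>x. Tr q x = 0 \<Longrightarrow> Ladj q a b c x = A * x + B * s x"
  proof -
    fix x :: 'a assume "Tr q x = 0"
    hence e: "s (s x) = x + s x" using sTr by simp
    show "Ladj q a b c x = A * x + B * s x"
      by (simp add: Ladj_def s_sq s_x s_mult e A_def B_def algebra_simps)
  qed
  define P where "P = A * s A + A * s B + B * s B"
  have sA: "s A = s a + b" by (simp add: A_def s_add s3)
  have sB: "s B = b + s (s a) + s (s b)" by (simp add: B_def s_add s3 c)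
  have TP: "Tr q (a ^ (q + 1) + a ^ q * b + b ^ (q + 1)) = P"
  proof -
    have "Tr q (a ^ (q + 1) + a ^ q * b + b ^ (q + 1)) =
      (a * s a + s a * b + b * s b) + (s a * s (s a) + s (s a) * s b + s b * s (s b))
       + (s (s a) * a + a * s (s b) + s (s b) * b)"
      by (simp add: Tr_s s_add s_mult s3 power_add s_x algebra_simps)
    also have "\<dots> = P"
      unfolding P_def sA sB A_def B_def c s_add
      using ident[of a "s a" "s b" b "s (s a)" "s (s b)"] two
      by (simp add: algebra_simps s3)
    finally show ?thesis .
  qed
  have cond: "(a + b ^ (q ^ 2) = 0 \<and> a + c ^ q = 0) \<longleftrightarrow> (A = 0 \<and> B = 0)"
  proof -
    have "a + c ^ q = A + B" unfolding A_def B_def s_x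
      by (metis add.assoc add.commute add.left_commute add_0_right yy)
    moreover have "a + b ^ (q ^ 2) = A" by (simp add: A_def s_sq)
    ultimately show ?thesis by auto
  qed
  define S where "S = {x. Tr q x = 0 \<and> Ladj q a b c x = 0}"
  have S_eq: "S = {x. Tr q x = 0 \<and> A * x + B * s x = 0}"
    unfolding S_def using Lad by auto
  define K where "K = {k::'a. s k = k}"
  define Z where "Z = {x::'a. Tr q x = 0}"
  have cardKZ: "card K = q \<and> card Z = q^2"
  proof -
    define \<phi> where "\<phi> = (\<lambda>x. s x + x)"
    have kerK: "{x. \<phi> x = 0} = K" unfolding \<phi>_def K_def
      using yy neg by (metis add_eq_0_iff)
    have rng: "range \<phi> \<subseteq> Z"
    proof
      fix y assume "y \<in> range \<phi>"
      then obtain x where "y = s x + x" unfolding \<phi>_def by auto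
      hence "Tr q y = (s x + x + s (s x)) + (s x + x + s (s x))"
        by (simp add: Tr_s s_add s3 algebra_simps)
      thus "y \<in> Z" unfolding Z_def using yy by simp
    qed
    have "card (UNIV::'a set) = card K * card (range \<phi>)"
      using card_kernel_image[of \<phi>] s_add kerK unfolding \<phi>_def by (simp add: algebra_simps)
    hence eq: "q * q^2 = card K * card (range \<phi>)" using assms(3) by (simp add: power3_eq_cube power2_eq_square)
    have "card K \<le> q"
    proof -
      have "K = {x. 1 * x^1 + 0 * x^1 + 1 * x^q = 0}" unfolding K_def s_def
        using yy neg by (auto, metis add_eq_0_iff)
      thus ?thesis using root_bound[where u="1::'a" and v=0 and w=1 and d=1 and e=1 and n=q] q2 by simp
    qed
    have cZ: "card Z \<le> q^2"
    proof -
      have "Z = {x. 1 * x^1 + 1 * x^q + 1 * x^(q^2) = 0}" unfolding Z_def Tr_def by simp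
      moreover have "q < q^2" using q2 by (simp add: power2_eq_square)
      ultimately show ?thesis using root_bound[where u="1::'a" and v=1 and w=1 and d=1 and e=q and n="q^2"] q2 by simp
    qed
    have cR: "card (range \<phi>) \<le> card Z" using rng by (simp add: card_mono)
    have "card K * card (range \<phi>) \<le> card K * q^2" using cR cZ by simp
    hence "q * q^2 \<le> card K * q^2" using eq by simp
    hence k1: "q \<le> card K" using q2 by simp
    have "card K * card (range \<phi>) \<le> q * card (range \<phi>)" using \<open>card K \<le> q\<close> by simp
    hence "q * q^2 \<le> q * card (range \<phi>)" using eq by simp
    hence "q^2 \<le> card (range \<phi>)" using q2 by simp
    thus ?thesis using k1 \<open>card K \<le> q\<close> cR cZ by simp
  qed
  show ?thesis
  proof (cases "P = 0")
    case False
    have "S = {0}"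
    proof (rule set_eqI, rule iffI)
      fix x :: 'a assume "x \<in> S"
      hence e3: "s (s x) = x + s x" and e1: "A * x + B * s x = 0" unfolding S_eq using sTr by auto
      have e2: "s A * s x + s B * (x + s x) = 0" using arg_cong[OF e1, of s] e3
        by (simp add: s_add s_mult s_eq0)
      have "P * x = s A * (A * x + B * s x) - B * (s A * s x + s B * (x + s x))
          + s B * (A * x + B * s x) + 2 * (B * s B * x)"
        unfolding P_def by (simp add: algebra_simps)
      also have "\<dots> = 0" using e1 e2 two by simp
      finally show "x \<in> {0}" using False by simp
    next
      fix x :: 'a assume "x \<in> {0}"
      have "s 0 = 0" using s_eq0 by simp
      thus "x \<in> S" unfolding S_eq using \<open>x \<in> {0}\<close> by (simp add: Tr_s)
    qed
    thus ?thesis using False TP S_def by simp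
  next
    case P0: True
    show ?thesis
    proof (cases "A = 0 \<and> B = 0")
      case True
      have "S = Z" unfolding S_eq Z_def using True by simp
      thus ?thesis using True cond P0 TP cardKZ S_def by simp
    next
      case AB: False
      have Bnz: "B \<noteq> 0"
      proof
        assume "B = 0"
        hence "A * s A = 0" using P0 unfolding P_def by (simp add: s0)
        thus False using AB \<open>B = 0\<close> s_eq0 by simp
      qed
      have sBnz: "s B \<noteq> 0" using Bnz s_eq0 by simp
      define r where "r = A / B"
      have sr: "s r = s A / s B" unfolding r_def by (simp add: s_div)
      have rr: "r * s r + r + 1 = 0"
      proof -
        have "r * s r + r + 1 = P / (B * s B)" unfolding sr unfolding r_def P_def using Bnz sBnz
          by (simp add: field_simps)
        thus ?thesis using P0 by simp
      qed
      have rr2: "s r * s (s r) + s r + 1 = 0" using arg_cong[OF rr, of s] by (simp add: s_add s_mult s_eq0 s1)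
      have N1: "r * s r * s (s r) = 1"
      proof -
        have "r * s r = r + 1" using rr neg by (metis add.assoc add_eq_0_iff)
        have a1: "s r * s (s r) = s r + 1" using rr2 neg by (metis add.assoc add_eq_0_iff)
        have a2: "r * (s r + 1) = 1" using rr neg by (metis add.assoc add_eq_0_iff distrib_left mult_1_right)
        show ?thesis using a1 a2 by (simp add: mult.assoc)
      qed
      have rnz: "r \<noteq> 0" using N1 by auto
      have srnz: "s r \<noteq> 0" using N1 by auto
      have ssrnz: "s (s r) \<noteq> 0" using N1 by auto
      define g where "g = (\<lambda>z. 1 * z^1 + (1/r) * z^q + s (s r) * z^(q^2))"
      have "card {z. g z = 0} \<le> q^2" unfolding g_def
        using root_bound[where u="1::'a" and v="1/r" and w="s (s r)" and d=1 and e=q and n="q^2"] ssrnz qq qq1 by simp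
      moreover have "q^2 < card (UNIV::'a set)" using assms(3) q2 by (simp add: power_strict_increasing)
      ultimately have "{z. g z = 0} \<noteq> UNIV" by auto
      then obtain z where gz: "g z \<noteq> 0" by auto
      define x0 where "x0 = g z"
      have x0: "x0 = z + s z / r + s (s r) * s (s z)" unfolding x0_def g_def by (simp add: s_x s_sq)
      have sx0: "s x0 = r * x0"
      proof -
        have h1: "s x0 = s z + s (s z) / s r + r * z" unfolding x0 by (simp add: s_add s_mult s_div s3)
        have h2: "r * s (s r) * s r = 1" using N1 by (simp add: ac_simps)
        have "s (s z) / s r = s (s z) * (r * s (s r) * s r) / s r" using h2 by simp
        also have "\<dots> = r * s (s r) * s (s z)" using srnz by simp
        finally have h3: "s (s z) / s r = r * s (s r) * s (s z)" .
        have h4: "r * (s z / r) = s z" using rnz by simp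
        have "r * x0 = r * z + r * (s z / r) + r * s (s r) * s (s z)" unfolding x0 by (simp add: algebra_simps)
        thus ?thesis unfolding h1 h3 h4 by (simp add: algebra_simps)
      qed
      have x0S: "x0 \<in> S"
      proof -
        have "s (s x0) = s (r * x0)" using sx0 by simp
        also have "\<dots> = s r * s x0" by (rule s_mult)
        also have "\<dots> = s r * r * x0" using sx0 by (simp add: ac_simps)
        finally have ssx0: "s (s x0) = s r * r * x0" .
        have "Tr q x0 = x0 * (r * s r + r + 1)" unfolding Tr_s ssx0 unfolding sx0 by (simp add: algebra_simps)
        hence t0: "Tr q x0 = 0" using rr by simp
        have "A * x0 + B * s x0 = A * x0 + A * x0" unfolding sx0 r_def using Bnz by simp
        thus ?thesis unfolding S_eq using t0 yy by simp
      qed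
      have x0nz: "x0 \<noteq> 0" using gz x0_def by simp
      have "S = (\<lambda>k. x0 * k) ` K"
      proof (rule set_eqI, rule iffI)
        fix x :: 'a assume "x \<in> S"
        hence e1: "A * x + B * s x = 0" unfolding S_eq by auto
        hence "B * s x = A * x" using neg by (metis add_eq_0_iff add.commute)
        hence sx: "s x = r * x" unfolding r_def using Bnz by (simp add: field_simps)
        have "s (x / x0) = x / x0" using sx sx0 rnz x0nz by (simp add: s_div)
        hence "x / x0 \<in> K" unfolding K_def by simp
        moreover have "x = x0 * (x / x0)" using x0nz by simp
        ultimately show "x \<in> (\<lambda>k. x0 * k) ` K" by blast
      next
        fix x :: 'a assume "x \<in> (\<lambda>k. x0 * k) ` K"
        then obtain k where k: "s k = k" "x = x0 * k" unfolding K_def by auto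
        have t0: "Tr q x0 = 0" and l0: "A * x0 + B * s x0 = 0" using x0S unfolding S_eq by auto
        have "Tr q x = k * Tr q x0" unfolding Tr_s k(2) using k(1) by (simp add: s_mult algebra_simps)
        moreover have "A * x + B * s x = k * (A * x0 + B * s x0)" unfolding k(2) using k(1)
          by (simp add: s_mult algebra_simps)
        ultimately show "x \<in> S" unfolding S_eq using t0 l0 by simp
      qed
      moreover have "inj_on (\<lambda>k. x0 * k) K" using x0nz by (auto simp: inj_on_def)
      ultimately have "card S = q" using cardKZ by (simp add: card_image)
      have T0: "\<not> Tr q (a ^ (q + 1) + a ^ q * b + b ^ (q + 1)) \<noteq> 0" using TP P0 by simp
      have nc: "\<not> (a + b ^ (q ^ 2) = 0 \<and> a + c ^ q = 0)" using AB cond by simp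
      show ?thesis unfolding if_not_P[OF T0] if_not_P[OF nc] using \<open>card S = q\<close> S_def by simp
    qed
  qed
qed

end
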